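(* Let $\mathcal D=(\mathsf D_1,\dots,\mathsf D_m)$ be a family of even cycles that contains no rainbow even cycle, and suppose $\mathcal D$ contains a rainbow $5$-cycle $\widetilde{\mathsf C}=\{\mathsf e_i=(v_iv_{i+1},\alpha_i): i=1,\dots,5\}$ (indices of $v$ and $\alpha$ taken modulo $5$, so $v_6=v_1$). Then there exist a shift $j\in\{0,1,2,3,4\}$, a vertex $v^*\notin\{v_1,\dots,v_5\}$ and an index $k\in\{1,\dots,5\}$ such that all five edges $(v_iv_{i+1},\alpha_{i+j})$, $i=1,\dots,5$, belong to $\mathcal D$, and at least one of the edges $(v^*v_k,\alpha_{k+j-1})$, $(v^*v_k,\alpha_{k+j})$ belongs to $\mathcal D$.
   Context: A (colored) graph is a finite set $\mathsf G$ of pairs $(e,\alpha)$, where the $e$'s are pairwise distinct 2-element subsets $\{u,v\}$ (written $uv$) of a vertex set and $\alpha$ is a color (colors may repeat). $\chi(\mathsf G)$ is its set of colors; $\mathsf G$ is rainbow if $|\chi(\mathsf G)|=|\mathsf G|$. A cycle is a colored graph whose underlying uncolored edges form a cycle; a $k$-cycle has $k$ edges; even cycles have even length. A family of cycles is a list $\mathcal D=(\mathsf D_1,\dots,\mathsf D_m)$ of cycles on a common vertex set, where all edges of $\mathsf D_i$ receive one color and different $\mathsf D_i$ receive different colors (underlying uncolored cycles may coincide). An edge $(uv,\alpha)$ belongs to $\mathcal D$ if it belongs to some $\mathsf D_i$ (necessarily the one of color $\alpha$). $\mathcal D$ contains a graph $\mathsf G$ if $\mathsf G\subseteq\bigcup_i\mathsf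 D_i$; a rainbow even cycle in $\mathcal D$ is a contained graph that is a rainbow even cycle. *)

theory Defs
  imports Main
begin

text \<open>Uncolored edges are 2-element vertex sets; a colored edge is a pair (edge, color).\<close>

definition is_cycle :: "'v set set \<Rightarrow> bool" where
  "is_cycle E \<longleftrightarrow> (\<exists>vs. length vs \<ge> 3 \<and> distinct vs \<and>
     E = {{vs ! i, vs ! ((i + 1) mod length vs)} | i. i < length vs})"

definition even_cycle :: "'v set set \<Rightarrow> bool" where
  "even_cycle E \<longleftrightarrow> is_cycle E \<and> even (card E)"

definition colored_graph :: "('v set \<times> 'c) set \<Rightarrow> bool" where
  "colored_graph G \<longleftrightarrow> finite G \<and> inj_on fst G \<and> (\<forall>(e, a) \<in> G. card e = 2)"

definition rainbow :: "('v set \<times> 'c) set \<Rightarrow> bool" where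
  "rainbow G \<longleftrightarrow> card (snd ` G) = card G"

text \<open>A family of cycles: list of (uncolored cycle, color), colors pairwise distinct;
  all edges of the i-th cycle receive the i-th color.\<close>
definition family_of_cycles :: "('v set set \<times> 'c) list \<Rightarrow> bool" where
  "family_of_cycles D \<longleftrightarrow> distinct (map snd D) \<and> (\<forall>(E, a) \<in> set D. is_cycle E)"

definition family_of_even_cycles :: "('v set set \<times> 'c) list \<Rightarrow> bool" where
  "family_of_even_cycles D \<longleftrightarrow> family_of_cycles D \<and> (\<forall>(E, a) \<in> set D. even_cycle E)"

definition family_edges :: "('v set set \<times> 'c) list \<Rightarrow> ('v set \<times> 'c) set" where
  "family_edges D = {(e, a). \<exists>E. (E, a) \<in> set D \<and> e \<in> E}"

definition family_contains :: "('v set set \<times> 'c) list \<Rightarrow> ('v set \<times> 'c) set \<Rightarrow> bool" where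
  "family_contains D G \<longleftrightarrow> G \<subseteq> family_edges D"

definition has_rainbow_even_cycle :: "('v set set \<times> 'c) list \<Rightarrow> bool" where
  "has_rainbow_even_cycle D \<longleftrightarrow> (\<exists>G. colored_graph G \<and> family_contains D G \<and>
      even_cycle (fst ` G) \<and> rainbow G)"

end

theory Submission
  imports Defs
begin


definition sc :: "nat \<Rightarrow> nat \<Rightarrow> nat" where "sc n i = (if Suc i = n then 0 else Suc i)"
definition pr :: "nat \<Rightarrow> nat \<Rightarrow> nat" where "pr n i = (if i = 0 then n - 1 else i - 1)"

lemma cyc_repr:
  assumes "is_cycle E"
  shows "\<exists>vs. 3 \<le> length vs \<and> distinct vs \<and>
     E = (\<lambda>i. {vs ! i, vs ! sc (length vs) i}) ` {..<length vs}"
proof -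
  obtain vs where v: "length vs \<ge> 3" "distinct vs"
    "E = {{vs ! i, vs ! ((i + 1) mod length vs)} | i. i < length vs}"
    using assms unfolding is_cycle_def by blast
  have "\<And>i. i < length vs \<Longrightarrow> (i + 1) mod length vs = sc (length vs) i"
    by (auto simp: sc_def)
  then have "E = (\<lambda>i. {vs ! i, vs ! sc (length vs) i}) ` {..<length vs}"
    using v(3) by (auto simp: image_def)
  then show ?thesis using v by blast
qed

locale cyc =
  fixes vs :: "'v list" and n
  assumes len: "3 \<le> length vs" and dist: "distinct vs" and n_def: "n = length vs"
begin

abbreviation "E \<equiv> (\<lambda>i. {vs ! i, vs ! sc n i}) ` {..<n}"

lemma sc_lt: "i < n \<Longrightarrow> sc n i < n" by (auto simp: sc_def)
lemma pr_lt: "i < n \<Longrightarrow> pr n i < n" by (auto simp: pr_def)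
lemma sc_pr: "i < n \<Longrightarrow> sc n (pr n i) = i" using len n_def by (auto simp: sc_def pr_def)
lemma pr_sc: "i < n \<Longrightarrow> pr n (sc n i) = i" using len n_def by (auto simp: sc_def pr_def)
lemma sc_ne: "i < n \<Longrightarrow> sc n i \<noteq> i" using len n_def by (auto simp: sc_def)
lemma pr_ne_sc: "i < n \<Longrightarrow> pr n i \<noteq> sc n i" using len n_def by (auto simp: sc_def pr_def)
lemma nth_inj: "i < n \<Longrightarrow> j < n \<Longrightarrow> vs ! i = vs ! j \<longleftrightarrow> i = j"
  using dist n_def by (simp add: nth_eq_iff_index_eq)

lemma nbr: assumes "{x, y} \<in> E"
  shows "\<exists>i<n. x = vs ! i \<and> (y = vs ! sc n i \<or> y = vs ! pr n i)"
proof -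
  from assms obtain j where j: "j < n" "{x, y} = {vs ! j, vs ! sc n j}" by auto
  then consider "x = vs ! j" "y = vs ! sc n j" | "x = vs ! sc n j" "y = vs ! j"
    by (auto simp: doubleton_eq_iff)
  then show ?thesis
  proof cases
    case 1 then show ?thesis using j by blast
  next
    case 2 then show ?thesis using j sc_lt pr_sc by metis
  qed
qed

lemma edge_sc: "i < n \<Longrightarrow> {vs ! i, vs ! sc n i} \<in> E" by auto
lemma edge_pr: "i < n \<Longrightarrow> {vs ! i, vs ! pr n i} \<in> E"
proof -
  assume i: "i < n"
  have "{vs ! pr n i, vs ! sc n (pr n i)} \<in> E" using pr_lt[OF i] by auto
  then show ?thesis using sc_pr[OF i] by (simp add: insert_commute)
qed

lemma noloop: "{x, x} \<notin> E"
proof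
  assume "{x, x} \<in> E"
  then obtain i where i: "i < n" "x = vs ! i" "x = vs ! sc n i \<or> x = vs ! pr n i" using nbr by blast
  then have "i = sc n i \<or> i = pr n i" using nth_inj sc_lt pr_lt by metis
  then show False using sc_ne sc_pr i(1) by metis
qed

lemma deg2: assumes "{x, y} \<in> E" shows "\<exists>z. z \<noteq> y \<and> {x, z} \<in> E"
proof -
  obtain i where i: "i < n" "x = vs ! i" "y = vs ! sc n i \<or> y = vs ! pr n i" using nbr[OF assms(1)] by blast
  have d: "vs ! sc n i \<noteq> vs ! pr n i" using nth_inj[OF sc_lt[OF i(1)] pr_lt[OF i(1)]] pr_ne_sc[OF i(1)] by simp
  from i(3) show ?thesis
  proof
    assume "y = vs ! sc n i" then show ?thesis using d i edge_pr[OF i(1)] by (intro exI[of _ "vs ! pr n i"]) auto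
  next
    assume "y = vs ! pr n i" then show ?thesis using d i edge_sc[OF i(1)] by (intro exI[of _ "vs ! sc n i"]) auto
  qed
qed

lemma deg3: assumes "{x, y1} \<in> E" "{x, y2} \<in> E" "{x, y3} \<in> E"
  shows "y1 = y2 \<or> y1 = y3 \<or> y2 = y3"
proof -
  obtain i where i: "i < n" "x = vs ! i" "y1 = vs ! sc n i \<or> y1 = vs ! pr n i" using nbr[OF assms(1)] by blast
  obtain i2 where i2: "i2 < n" "x = vs ! i2" "y2 = vs ! sc n i2 \<or> y2 = vs ! pr n i2" using nbr[OF assms(2)] by blast
  obtain i3 where i3: "i3 < n" "x = vs ! i3" "y3 = vs ! sc n i3 \<or> y3 = vs ! pr n i3" using nbr[OF assms(3)] by blast
  have "i2 = i" using nth_inj[OF i2(1) i(1)] i(2) i2(2) by simp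
  moreover have "i3 = i" using nth_inj[OF i3(1) i(1)] i(2) i3(2) by simp
  ultimately show ?thesis using i(3) i2(3) i3(3) by auto
qed

lemma card_E: "card E = n"
proof -
  have "inj_on (\<lambda>i. {vs ! i, vs ! sc n i}) {..<n}"
  proof (rule inj_onI)
    fix i j assume ij: "i \<in> {..<n}" "j \<in> {..<n}" "{vs ! i, vs ! sc n i} = {vs ! j, vs ! sc n j}"
    then have l: "i < n" "j < n" by auto
    from ij(3) consider "vs ! i = vs ! j" | "vs ! i = vs ! sc n j" "vs ! sc n i = vs ! j"
      by (auto simp: doubleton_eq_iff)
    then show "i = j"
    proof cases
      case 1 then show ?thesis using nth_inj l by blast
    next
      case 2
      then have "i = sc n j" "sc n i = j" using nth_inj l sc_lt by blast+
      then show ?thesis using len n_def l by (auto simp: sc_def split: if_splits)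
    qed
  qed
  then show ?thesis by (simp add: card_image)
qed

lemma odd5:
  assumes d: "distinct [x0, x1, x2, x3, x4]"
    and e: "{x0, x1} \<in> E" "{x1, x2} \<in> E" "{x2, x3} \<in> E" "{x3, x4} \<in> E" "{x4, x0} \<in> E"
  shows "card E = 5"
proof -
  define V where "V = {x0, x1, x2, x3, x4}"
  have sym: "{a, b} \<in> E \<Longrightarrow> {b, a} \<in> E" for a b by (simp add: insert_commute)
  have clo: "y \<in> V" if "x \<in> V" "{x, y} \<in> E" for x y
  proof -
    have h: "y = p \<or> y = q" if "{x, p} \<in> E" "{x, q} \<in> E" "p \<noteq> q" for p q
      using deg3[OF \<open>{x, y} \<in> E\<close> that(1,2)] that(3) by auto
    from that(1) consider "x = x0" | "x = x1" | "x = x2" | "x = x3" | "x = x4" unfolding V_def by blast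
    then show ?thesis
    proof cases
      case 1 then show ?thesis using h[of x1 x4] e(1) sym[OF e(5)] d unfolding V_def by auto
    next
      case 2 then show ?thesis using h[of x0 x2] sym[OF e(1)] e(2) d unfolding V_def by auto
    next
      case 3 then show ?thesis using h[of x1 x3] sym[OF e(2)] e(3) d unfolding V_def by auto
    next
      case 4 then show ?thesis using h[of x2 x4] sym[OF e(3)] e(4) d unfolding V_def by auto
    next
      case 5 then show ?thesis using h[of x3 x0] sym[OF e(4)] e(5) d unfolding V_def by auto
    qed
  qed
  define I where "I = {i. i < n \<and> vs ! i \<in> V}"
  have x0: "x0 \<in> set vs" using nbr[OF e(1)] n_def by auto
  then obtain i0 where i0: "i0 < n" "vs ! i0 = x0" by (metis in_set_conv_nth n_def)
  have scI: "i \<in> I \<Longrightarrow> sc n i \<in> I" for i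
    using clo edge_sc sc_lt unfolding I_def by auto
  have prI: "i \<in> I \<Longrightarrow> pr n i \<in> I" for i
    using clo edge_pr pr_lt unfolding I_def by auto
  have "i \<in> I \<Longrightarrow> 0 \<in> I" for i
  proof (induction i)
    case (Suc i)
    then have "pr n (Suc i) \<in> I" using prI by blast
    then show ?case using Suc by (simp add: pr_def)
  qed simp
  then have z: "0 \<in> I" using i0 unfolding I_def V_def by auto
  have all: "m < n \<Longrightarrow> m \<in> I" for m
  proof (induction m)
    case (Suc m)
    then have "sc n m \<in> I" using scI by simp
    then show ?case using Suc by (simp add: sc_def split: if_splits)
  qed (use z in simp)
  have "set vs \<subseteq> V"
    using all unfolding I_def n_def by (auto simp: in_set_conv_nth)
  moreover have "V \<subseteq> set vs"
  proof -
    have "x \<in> set vs" if "{x, y} \<in> E" for x y using nbr[OF that] n_def by auto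
    then show ?thesis using e unfolding V_def by blast
  qed
  ultimately have "set vs = V" by blast
  then have "n = 5" using d n_def distinct_card[OF dist] unfolding V_def by simp
  then show ?thesis using card_E by simp
qed

end


lemma cyc_obtain:
  assumes "is_cycle E"
  obtains vs where "cyc vs (length vs)" "E = (\<lambda>i. {vs ! i, vs ! sc (length vs) i}) ` {..<length vs}"
  using cyc_repr[OF assms] unfolding cyc_def by blast

lemma uniqE:
  assumes "distinct (map snd D)" "(E, c) \<in> set D" "(E', c) \<in> set D"
  shows "E = E'"
proof -
  have "inj_on snd (set D)" using assms(1) by (simp add: distinct_map)
  then show ?thesis using assms(2,3) by (metis inj_onD prod.inject snd_conv)
qed

lemma fe_iff: "(e, c) \<in> family_edges D \<longleftrightarrow> (\<exists>E. (E, c) \<in> set D \<and> e \<in> E)"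
  by (simp add: family_edges_def)

context
  fixes D :: "('v set set \<times> 'c) list"
  assumes fam: "family_of_even_cycles D"
begin

lemma fe_cyc: "(E, c) \<in> set D \<Longrightarrow> is_cycle E \<and> even (card E)"
  using fam unfolding family_of_even_cycles_def even_cycle_def by auto

lemma fe_dist: "distinct (map snd D)"
  using fam unfolding family_of_even_cycles_def family_of_cycles_def by auto

lemma fe_noloop: "({x, x}, c) \<notin> family_edges D"
proof
  assume "({x, x}, c) \<in> family_edges D"
  then obtain E where E: "(E, c) \<in> set D" "{x, x} \<in> E" by (auto simp: fe_iff)
  obtain vs where c: "cyc vs (length vs)" "E = (\<lambda>i. {vs ! i, vs ! sc (length vs) i}) ` {..<length vs}"
    using cyc_obtain fe_cyc[OF E(1)] by blast
  show False using cyc.noloop[OF c(1), of x] E(2) unfolding c(2) by blast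
qed

lemma fe_deg2: "({x, y}, c) \<in> family_edges D \<Longrightarrow> \<exists>z. z \<noteq> y \<and> ({x, z}, c) \<in> family_edges D"
proof -
  assume "({x, y}, c) \<in> family_edges D"
  then obtain E where E: "(E, c) \<in> set D" "{x, y} \<in> E" by (auto simp: fe_iff)
  obtain vs where c: "cyc vs (length vs)" "E = (\<lambda>i. {vs ! i, vs ! sc (length vs) i}) ` {..<length vs}"
    using cyc_obtain fe_cyc[OF E(1)] by blast
  obtain z where "z \<noteq> y" "{x, z} \<in> E" using cyc.deg2[OF c(1), of x y] E(2) unfolding c(2) by blast
  then show ?thesis using E(1) by (auto simp: fe_iff)
qed

lemma fe_deg3:
  assumes "({x, y1}, c) \<in> family_edges D" "({x, y2}, c) \<in> family_edges D" "({x, y3}, c) \<in> family_edges D"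
  shows "y1 = y2 \<or> y1 = y3 \<or> y2 = y3"
proof -
  obtain E where E: "(E, c) \<in> set D" "{x, y1} \<in> E" using assms(1) by (auto simp: fe_iff)
  obtain E2 where E2: "(E2, c) \<in> set D" "{x, y2} \<in> E2" using assms(2) by (auto simp: fe_iff)
  obtain E3 where E3: "(E3, c) \<in> set D" "{x, y3} \<in> E3" using assms(3) by (auto simp: fe_iff)
  have "E2 = E" "E3 = E" using uniqE[OF fe_dist] E E2 E3 by blast+
  obtain vs where c: "cyc vs (length vs)" "E = (\<lambda>i. {vs ! i, vs ! sc (length vs) i}) ` {..<length vs}"
    using cyc_obtain fe_cyc[OF E(1)] by blast
  have "{x, y2} \<in> E" "{x, y3} \<in> E" using E2(2) E3(2) \<open>E2 = E\<close> \<open>E3 = E\<close> by simp_all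
  then show ?thesis using cyc.deg3[OF c(1), of x y1 y2 y3] E(2) unfolding c(2) by blast
qed

lemma fe_odd5:
  assumes d: "distinct [x0, x1, x2, x3, x4]"
    and e: "({x0, x1}, c) \<in> family_edges D" "({x1, x2}, c) \<in> family_edges D"
      "({x2, x3}, c) \<in> family_edges D" "({x3, x4}, c) \<in> family_edges D" "({x4, x0}, c) \<in> family_edges D"
  shows False
proof -
  obtain E where E: "(E, c) \<in> set D" "{x0, x1} \<in> E" using e(1) by (auto simp: fe_iff)
  have EE: "{a, b} \<in> E" if h: "({a, b}, c) \<in> family_edges D" for a b
  proof -
    obtain E' where "(E', c) \<in> set D" "{a, b} \<in> E'" using h unfolding family_edges_def by blast
    then show ?thesis using uniqE[OF fe_dist] E(1) by blast
  qed
  obtain vs where c: "cyc vs (length vs)" "E = (\<lambda>i. {vs ! i, vs ! sc (length vs) i}) ` {..<length vs}"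
    using cyc_obtain fe_cyc[OF E(1)] by blast
  have "card E = 5" using cyc.odd5[OF c(1) d] EE[OF e(1)] EE[OF e(2)] EE[OF e(3)] EE[OF e(4)] EE[OF e(5)] c(2) by simp
  then show False using fe_cyc[OF E(1)] by simp
qed

end

lemma lt4: "{f i |i. i < (4::nat)} = {f 0, f 1, f 2, f 3}"
proof -
  have "{f i |i. i < (4::nat)} = f ` {..<4}" by auto
  also have "{..<4::nat} = {0, 1, 2, 3}" by auto
  finally show ?thesis by simp
qed

lemma rainbow4:
  assumes d: "distinct [a, b, c, d]" and p: "distinct [p, q, r, s]"
    and e: "({a, b}, p) \<in> family_edges D" "({b, c}, q) \<in> family_edges D"
      "({c, d}, r) \<in> family_edges D" "({d, a}, s) \<in> family_edges D"
  shows "has_rainbow_even_cycle D"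
proof -
  define G where "G = {({a, b}, p), ({b, c}, q), ({c, d}, r), ({d, a}, s)}"
  have n1: "{a, b} \<noteq> {b, c}" "{a, b} \<noteq> {c, d}" "{a, b} \<noteq> {d, a}"
     "{b, c} \<noteq> {c, d}" "{b, c} \<noteq> {d, a}" "{c, d} \<noteq> {d, a}"
    using d by (auto simp: doubleton_eq_iff)
  have n2: "p \<noteq> q" "p \<noteq> r" "p \<noteq> s" "q \<noteq> r" "q \<noteq> s" "r \<noteq> s" using p by auto
  have cg: "colored_graph G"
    unfolding colored_graph_def G_def using d n1 by (auto simp: inj_on_def)
  have fc: "family_contains D G" unfolding family_contains_def G_def using e by auto
  have fG: "fst ` G = {{a, b}, {b, c}, {c, d}, {d, a}}" unfolding G_def by simp
  have cy: "is_cycle (fst ` G)"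
    unfolding is_cycle_def fG
  proof -
    have s: "{{[a, b, c, d] ! i, [a, b, c, d] ! ((i + 1) mod length [a, b, c, d])} | i. i < length [a, b, c, d]}
       = {{a, b}, {b, c}, {c, d}, {d, a}}"
    proof -
      have g: "\<And>f n. {f i | i. i < (n::nat)} = f ` {..<n}" by auto
      have l4: "{..<length [a, b, c, d]} = {0, 1, 2, 3::nat}" by auto
      show ?thesis unfolding g l4 by (simp add: insert_commute)
    qed
    show "\<exists>vs. 3 \<le> length vs \<and> distinct vs \<and> {{a, b}, {b, c}, {c, d}, {d, a}} =
     {{vs ! i, vs ! ((i + 1) mod length vs)} |i. i < length vs}"
      using d s by (intro exI[of _ "[a, b, c, d]"]) simp
  qed
  have "card (fst ` G) = 4" unfolding fG using n1 by simp
  then have ec: "even_cycle (fst ` G)" using cy by (simp add: even_cycle_def)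
  have "card G = 4" unfolding G_def using n2 by simp
  moreover have "card (snd ` G) = 4" unfolding G_def using n2 by simp
  ultimately have "rainbow G" by (simp add: rainbow_def)
  then show ?thesis using cg fc ec unfolding has_rainbow_even_cycle_def by blast
qed



lemma prop5:
  assumes "(P0 \<or> A0) \<and> (Q0 \<or> B0) \<and> (B0 \<longrightarrow> \<not> P1) \<and> (A0 \<longrightarrow> \<not> Q4) \<and> \<not> (B0 \<and> Q2 \<and> Q3 \<and> Q4) \<and> \<not> (B0 \<and> A1 \<and> B2)"
    and "(P1 \<or> A1) \<and> (Q1 \<or> B1) \<and> (B1 \<longrightarrow> \<not> P2) \<and> (A1 \<longrightarrow> \<not> Q0) \<and> \<not> (B1 \<and> Q3 \<and> Q4 \<and> Q0) \<and> \<not> (B1 \<and> A2 \<and> B3)"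
    and "(P2 \<or> A2) \<and> (Q2 \<or> B2) \<and> (B2 \<longrightarrow> \<not> P3) \<and> (A2 \<longrightarrow> \<not> Q1) \<and> \<not> (B2 \<and> Q4 \<and> Q0 \<and> Q1) \<and> \<not> (B2 \<and> A3 \<and> B4)"
    and "(P3 \<or> A3) \<and> (Q3 \<or> B3) \<and> (B3 \<longrightarrow> \<not> P4) \<and> (A3 \<longrightarrow> \<not> Q2) \<and> \<not> (B3 \<and> Q0 \<and> Q1 \<and> Q2) \<and> \<not> (B3 \<and> A4 \<and> B0)"
    and "(P4 \<or> A4) \<and> (Q4 \<or> B4) \<and> (B4 \<longrightarrow> \<not> P0) \<and> (A4 \<longrightarrow> \<not> Q3) \<and> \<not> (B4 \<and> Q1 \<and> Q2 \<and> Q3) \<and> \<not> (B4 \<and> A0 \<and> B1)"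
  shows "(Q0 \<and> Q1 \<and> Q2 \<and> Q3 \<and> Q4) \<and> (P0 \<and> P1 \<and> P2 \<and> P3 \<and> P4)"
  using assms by sat

locale rs =
  fixes M :: "'v \<Rightarrow> 'v \<Rightarrow> 'c \<Rightarrow> bool"
  assumes msym: "M x y c \<Longrightarrow> M y x c"
  and mnoloop: "\<not> M x x c"
  and mdeg2: "M x y c \<Longrightarrow> \<exists>z. z \<noteq> y \<and> M x z c"
  and mdeg3: "M x y1 c \<Longrightarrow> M x y2 c \<Longrightarrow> M x y3 c \<Longrightarrow> y1 = y2 \<or> y1 = y3 \<or> y2 = y3"
  and modd5: "distinct [x0, x1, x2, x3, x4] \<Longrightarrow> M x0 x1 c \<Longrightarrow> M x1 x2 c \<Longrightarrow> M x2 x3 c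
     \<Longrightarrow> M x3 x4 c \<Longrightarrow> M x4 x0 c \<Longrightarrow> False"
  and mrb: "distinct [u1, u2, u3, u4] \<Longrightarrow> distinct [p, q, r, s] \<Longrightarrow> M u1 u2 p \<Longrightarrow> M u2 u3 q
     \<Longrightarrow> M u3 u4 r \<Longrightarrow> M u4 u1 s \<Longrightarrow> False"
begin

lemma rot:
  assumes d: "distinct [a0, a1, a2, a3, a4]" and dc: "distinct [c0, c1, c2, c3, c4]"
  and e: "M a0 a1 c0" "M a1 a2 c1" "M a2 a3 c2" "M a3 a4 c3" "M a4 a0 c4"
  and hv: "V = {a0, a1, a2, a3, a4}"
  and o0': "\<forall>w. M a0 w c0 \<longrightarrow> w \<in> V"
  and o1': "\<forall>w. M a1 w c0 \<longrightarrow> w \<in> V"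
  shows "(M a4 a0 c0 \<or> M a3 a0 c0) \<and> (M a1 a2 c0 \<or> M a1 a3 c0)
     \<and> (M a1 a3 c0 \<longrightarrow> \<not> M a0 a1 c1) \<and> (M a3 a0 c0 \<longrightarrow> \<not> M a0 a1 c4)
     \<and> \<not> (M a1 a3 c0 \<and> M a3 a4 c2 \<and> M a4 a0 c3 \<and> M a0 a1 c4)
     \<and> \<not> (M a1 a3 c0 \<and> M a4 a1 c1 \<and> M a3 a0 c2)"
proof -
  have ch02: "\<not> M a0 a2 c0" using mrb[of a2 a3 a4 a0 c2 c3 c4 c0] d dc e by auto
  have ch41: "\<not> M a4 a1 c0" using mrb[of a1 a2 a3 a4 c1 c2 c3 c0] d dc e by auto
  note o0 = o0'[rule_format] and o1 = o1'[rule_format]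
  obtain z where z: "z \<noteq> a1" "M a0 z c0" using mdeg2[OF e(1)] by blast
  have "z \<in> V" using o0 z(2) .
  moreover have "z \<noteq> a0" using z(2) mnoloop by blast
  ultimately have "z = a3 \<or> z = a4" using z ch02 hv by auto
  then have h1: "M a4 a0 c0 \<or> M a3 a0 c0" using z(2) msym by blast
  obtain y where y: "y \<noteq> a0" "M a1 y c0" using mdeg2[OF msym[OF e(1)]] by blast
  have "y \<in> V" using o1 y(2) .
  moreover have "y \<noteq> a1" using y(2) mnoloop by blast
  moreover have "y \<noteq> a4" using y(2) ch41 msym by blast
  ultimately have "y = a2 \<or> y = a3" using y hv by auto
  then have h2: "M a1 a2 c0 \<or> M a1 a3 c0" using y(2) by blast
  have l1: "M a1 a3 c0 \<longrightarrow> \<not> M a0 a1 c1" using mrb[of a1 a3 a4 a0 c0 c3 c4 c1] d dc e by auto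
  have l2: "M a3 a0 c0 \<longrightarrow> \<not> M a0 a1 c4" using mrb[of a3 a0 a1 a2 c0 c4 c1 c2] d dc e by auto
  have l3: "\<not> (M a1 a3 c0 \<and> M a3 a4 c2 \<and> M a4 a0 c3 \<and> M a0 a1 c4)"
    using mrb[of a1 a3 a4 a0 c0 c2 c3 c4] d dc by auto
  have l4: "\<not> (M a1 a3 c0 \<and> M a4 a1 c1 \<and> M a3 a0 c2)"
    using mrb[of a1 a3 a0 a4 c0 c2 c4 c1] d dc msym[OF e(5)] by auto
  show ?thesis using h1 h2 l1 l2 l3 l4 by blast
qed

lemma core:
  assumes d: "distinct [a0, a1, a2, a3, a4]" and dc: "distinct [c0, c1, c2, c3, c4]"
  and e: "M a0 a1 c0" "M a1 a2 c1" "M a2 a3 c2" "M a3 a4 c3" "M a4 a0 c4"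
  and hv: "V = {a0, a1, a2, a3, a4}"
  and o00: "\<And>w. M a0 w c0 \<Longrightarrow> w \<in> V" and o01: "\<And>w. M a1 w c0 \<Longrightarrow> w \<in> V"
  and o10: "\<And>w. M a1 w c1 \<Longrightarrow> w \<in> V" and o11: "\<And>w. M a2 w c1 \<Longrightarrow> w \<in> V"
  and o20: "\<And>w. M a2 w c2 \<Longrightarrow> w \<in> V" and o21: "\<And>w. M a3 w c2 \<Longrightarrow> w \<in> V"
  and o30: "\<And>w. M a3 w c3 \<Longrightarrow> w \<in> V" and o31: "\<And>w. M a4 w c3 \<Longrightarrow> w \<in> V"
  and o40: "\<And>w. M a4 w c4 \<Longrightarrow> w \<in> V" and o41: "\<And>w. M a0 w c4 \<Longrightarrow> w \<in> V"
  and oP: "\<And>w. M a4 a0 c0 \<Longrightarrow> M a0 a1 c1 \<Longrightarrow> M a1 a2 c2 \<Longrightarrow> M a2 a3 c3 \<Longrightarrow> M a3 a4 c4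
      \<Longrightarrow> M a0 w c1 \<Longrightarrow> w \<in> V"
  and oQ: "\<And>w. M a1 a2 c0 \<Longrightarrow> M a2 a3 c1 \<Longrightarrow> M a3 a4 c2 \<Longrightarrow> M a4 a0 c3 \<Longrightarrow> M a0 a1 c4
      \<Longrightarrow> M a3 w c1 \<Longrightarrow> w \<in> V"
  shows False
proof -
  have oo: "\<forall>w. M a0 w c0 \<longrightarrow> w \<in> V" "\<forall>w. M a1 w c0 \<longrightarrow> w \<in> V"
    "\<forall>w. M a1 w c1 \<longrightarrow> w \<in> V" "\<forall>w. M a2 w c1 \<longrightarrow> w \<in> V"
    "\<forall>w. M a2 w c2 \<longrightarrow> w \<in> V" "\<forall>w. M a3 w c2 \<longrightarrow> w \<in> V"
    "\<forall>w. M a3 w c3 \<longrightarrow> w \<in> V" "\<forall>w. M a4 w c3 \<longrightarrow> w \<in> V"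
    "\<forall>w. M a4 w c4 \<longrightarrow> w \<in> V" "\<forall>w. M a0 w c4 \<longrightarrow> w \<in> V"
    using o00 o01 o10 o11 o20 o21 o30 o31 o40 o41 by blast+
  note r0 = rot[OF d dc e hv oo(1,2)]
  have d1: "distinct [a1, a2, a3, a4, a0]" "distinct [c1, c2, c3, c4, c0]" using d dc by auto
  have d2: "distinct [a2, a3, a4, a0, a1]" "distinct [c2, c3, c4, c0, c1]" using d dc by auto
  have d3: "distinct [a3, a4, a0, a1, a2]" "distinct [c3, c4, c0, c1, c2]" using d dc by auto
  have d4: "distinct [a4, a0, a1, a2, a3]" "distinct [c4, c0, c1, c2, c3]" using d dc by auto
  have v1: "V = {a1, a2, a3, a4, a0}" "V = {a2, a3, a4, a0, a1}" "V = {a3, a4, a0, a1, a2}"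
     "V = {a4, a0, a1, a2, a3}" using hv by auto
  note r1 = rot[OF d1 e(2,3,4,5,1) v1(1) oo(3,4)]
  note r2 = rot[OF d2 e(3,4,5,1,2) v1(2) oo(5,6)]
  note r3 = rot[OF d3 e(4,5,1,2,3) v1(3) oo(7,8)]
  note r4 = rot[OF d4 e(5,1,2,3,4) v1(4) oo(9,10)]
  note QP = prop5[OF r0 r1 r2 r3 r4]
  have Q: "M a1 a2 c0 \<and> M a2 a3 c1 \<and> M a3 a4 c2 \<and> M a4 a0 c3 \<and> M a0 a1 c4"
    using QP by (elim conjE) (intro conjI)
  have P: "M a4 a0 c0 \<and> M a0 a1 c1 \<and> M a1 a2 c2 \<and> M a2 a3 c3 \<and> M a3 a4 c4"
    using QP by (elim conjE) (intro conjI)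
  have oa0: "\<And>w. M a0 w c1 \<Longrightarrow> w \<in> V" using oP P by blast
  have oa3: "\<And>w. M a3 w c1 \<Longrightarrow> w \<in> V" using oQ Q by blast
  have ch: "\<not> M a0 a2 c1" using mrb[of a2 a3 a4 a0 c2 c3 c4 c1] d dc e by auto
  have p01: "M a0 a1 c1" using P by blast
  have q23: "M a2 a3 c1" using Q by blast
  obtain z where z: "z \<noteq> a1" "M a0 z c1" using mdeg2[OF p01] by blast
  have "z \<in> V" using oa0 z(2) .
  moreover have "z \<noteq> a0" using z(2) mnoloop by blast
  ultimately have zz: "z = a3 \<or> z = a4" using z ch hv by auto
  obtain y where y: "y \<noteq> a2" "M a3 y c1" using mdeg2[OF msym[OF q23]] by blast
  have "y \<in> V" using oa3 y(2) .
  moreover have "y \<noteq> a3" using y(2) mnoloop by blast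
  moreover have "y \<noteq> a1"
  proof
    assume "y = a1"
    then have "M a1 a3 c1" using y(2) msym by blast
    then show False using mdeg3[OF msym[OF p01] e(2)] d by auto
  qed
  ultimately have yy: "y = a0 \<or> y = a4" using y hv by auto
  show False
  proof (cases "M a3 a0 c1")
    case True
    then show False using mrb[of a3 a0 a1 a2 c1 c4 c0 c2] d dc Q e by auto
  next
    case False
    then have "z = a4" "y = a4" using zz yy z(2) y(2) msym by blast+
    then show False using modd5[of a0 a1 a2 a3 a4 c1] d p01 e(2) q23 y(2) z(2) msym by blast
  qed
qed

end


lemma lt5: "(i::nat) < 5 \<longleftrightarrow> i = 0 \<or> i = 1 \<or> i = 2 \<or> i = 3 \<or> i = 4" by auto

lemma five: "P 0 \<Longrightarrow> P 1 \<Longrightarrow> P 2 \<Longrightarrow> P 3 \<Longrightarrow> P 4 \<Longrightarrow> i < (5::nat) \<Longrightarrow> P i"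
  using lt5 by metis




theorem lemma3p6:
  fixes D :: "('v set set \<times> 'c) list"
    and v :: "nat \<Rightarrow> 'v" and \<alpha> :: "nat \<Rightarrow> 'c"
  assumes "family_of_even_cycles D"
    and "\<not> has_rainbow_even_cycle D"
    and "inj_on v {..<5}"
    and "inj_on \<alpha> {..<5}"
    and "family_contains D {({v i, v ((i + 1) mod 5)}, \<alpha> i) | i. i < 5}"
  shows "\<exists>j < 5. \<exists>w. w \<notin> v ` {..<5} \<and> (\<exists>k < 5.
           family_contains D {({v i, v ((i + 1) mod 5)}, \<alpha> ((i + j) mod 5)) | i. i < 5} \<and>
           (({w, v k}, \<alpha> ((k + j + 4) mod 5)) \<in> family_edges D \<or>
            ({w, v k}, \<alpha> ((k + j) mod 5)) \<in> family_edges D))"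
proof (rule ccontr)
  assume NG: "\<not> ?thesis"
  interpret r: rs "\<lambda>x y c. ({x, y}, c) \<in> family_edges D"
    apply unfold_locales
    subgoal by (simp add: insert_commute)
    subgoal by (rule fe_noloop[OF assms(1)])
    subgoal by (rule fe_deg2[OF assms(1)])
    subgoal using fe_deg3[OF assms(1)] by blast
    subgoal using fe_odd5[OF assms(1)] by blast
    subgoal premises p using assms(2) rainbow4[OF p] by blast
    done
  define V where "V = {v 0, v 1, v 2, v 3, v 4}"
  have l5: "{..<5::nat} = {0, 1, 2, 3, 4}" by auto
  have Vset: "v ` {..<5} = V" unfolding V_def l5 by simp
  have iv: "\<And>i j. v i = v j \<Longrightarrow> i < 5 \<Longrightarrow> j < 5 \<Longrightarrow> i = j" using assms(3) by (auto simp: inj_on_def)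
  have ia: "\<And>i j. \<alpha> i = \<alpha> j \<Longrightarrow> i < 5 \<Longrightarrow> j < 5 \<Longrightarrow> i = j" using assms(4) by (auto simp: inj_on_def)
  have d: "distinct [v 0, v 1, v 2, v 3, v 4]"
  proof -
    have "v i \<noteq> v j" if "i < 5" "j < 5" "i \<noteq> j" for i j using iv that by blast
    then show ?thesis by simp
  qed
  have dc: "distinct [\<alpha> 0, \<alpha> 1, \<alpha> 2, \<alpha> 3, \<alpha> 4]"
  proof -
    have "\<alpha> i \<noteq> \<alpha> j" if "i < 5" "j < 5" "i \<noteq> j" for i j using ia that by blast
    then show ?thesis by simp
  qed
  have fc: "\<And>i. i < 5 \<Longrightarrow> ({v i, v ((i + 1) mod 5)}, \<alpha> i) \<in> family_edges D"
    using assms(5) unfolding family_contains_def by blast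
  have e: "({v 0, v 1}, \<alpha> 0) \<in> family_edges D" "({v 1, v 2}, \<alpha> 1) \<in> family_edges D"
    "({v 2, v 3}, \<alpha> 2) \<in> family_edges D" "({v 3, v 4}, \<alpha> 3) \<in> family_edges D"
    "({v 4, v 0}, \<alpha> 4) \<in> family_edges D"
  proof -
    have m: "(0 + 1) mod 5 = (1::nat)" "(1 + 1) mod 5 = (2::nat)" "(2 + 1) mod 5 = (3::nat)"
      "(3 + 1) mod 5 = (4::nat)" "(4 + 1) mod 5 = (0::nat)" by simp_all
    show "({v 0, v 1}, \<alpha> 0) \<in> family_edges D" using fc[of 0, unfolded m] by simp
    show "({v 1, v 2}, \<alpha> 1) \<in> family_edges D" using fc[of 1, unfolded m] by simp
    show "({v 2, v 3}, \<alpha> 2) \<in> family_edges D" using fc[of 2, unfolded m] by simp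
    show "({v 3, v 4}, \<alpha> 3) \<in> family_edges D" using fc[of 3, unfolded m] by simp
    show "({v 4, v 0}, \<alpha> 4) \<in> family_edges D" using fc[of 4, unfolded m] by simp
  qed
  have FC: "family_contains D {({v i, v ((i + 1) mod 5)}, \<alpha> ((i + j) mod 5)) | i. i < 5}"
    if "\<And>i. i < 5 \<Longrightarrow> ({v i, v ((i + 1) mod 5)}, \<alpha> ((i + j) mod 5)) \<in> family_edges D" for j
    using that unfolding family_contains_def by blast
  have ng: "w \<in> V" if "j < 5" "k < 5"
    "family_contains D {({v i, v ((i + 1) mod 5)}, \<alpha> ((i + j) mod 5)) | i. i < 5}"
    "({w, v k}, \<alpha> ((k + j + 4) mod 5)) \<in> family_edges D \<or> ({w, v k}, \<alpha> ((k + j) mod 5)) \<in> family_edges D"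
    for j k w
    using NG that Vset by blast
  have FC0: "family_contains D {({v i, v ((i + 1) mod 5)}, \<alpha> ((i + 0) mod 5)) | i. i < 5}"
    by (rule FC) (use fc in simp)
  have o00: "\<And>w. ({v 0, w}, \<alpha> 0) \<in> family_edges D \<Longrightarrow> w \<in> V"
    using ng[OF _ _ FC0, of 0] by (simp add: insert_commute)
  have o01: "\<And>w. ({v 1, w}, \<alpha> 0) \<in> family_edges D \<Longrightarrow> w \<in> V"
    using ng[OF _ _ FC0, of 1] by (simp add: insert_commute)
  have o10: "\<And>w. ({v 1, w}, \<alpha> 1) \<in> family_edges D \<Longrightarrow> w \<in> V"
    using ng[OF _ _ FC0, of 1] by (simp add: insert_commute)
  have o11: "\<And>w. ({v 2, w}, \<alpha> 1) \<in> family_edges D \<Longrightarrow> w \<in> V"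
    using ng[OF _ _ FC0, of 2] by (simp add: insert_commute)
  have o20: "\<And>w. ({v 2, w}, \<alpha> 2) \<in> family_edges D \<Longrightarrow> w \<in> V"
    using ng[OF _ _ FC0, of 2] by (simp add: insert_commute)
  have o21: "\<And>w. ({v 3, w}, \<alpha> 2) \<in> family_edges D \<Longrightarrow> w \<in> V"
    using ng[OF _ _ FC0, of 3] by (simp add: insert_commute)
  have o30: "\<And>w. ({v 3, w}, \<alpha> 3) \<in> family_edges D \<Longrightarrow> w \<in> V"
    using ng[OF _ _ FC0, of 3] by (simp add: insert_commute)
  have o31: "\<And>w. ({v 4, w}, \<alpha> 3) \<in> family_edges D \<Longrightarrow> w \<in> V"
    using ng[OF _ _ FC0, of 4] by (simp add: insert_commute)
  have o40: "\<And>w. ({v 4, w}, \<alpha> 4) \<in> family_edges D \<Longrightarrow> w \<in> V"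
    using ng[OF _ _ FC0, of 4] by (simp add: insert_commute)
  have o41: "\<And>w. ({v 0, w}, \<alpha> 4) \<in> family_edges D \<Longrightarrow> w \<in> V"
    using ng[OF _ _ FC0, of 0] by (simp add: insert_commute)
  have mm: "(0 + 1) mod 5 = (1::nat)" "(1 + 1) mod 5 = (2::nat)" "(2 + 1) mod 5 = (3::nat)"
      "(3 + 1) mod 5 = (4::nat)" "(4 + 1) mod 5 = (0::nat)"
      "(0 + 4) mod 5 = (4::nat)" "(1 + 4) mod 5 = (0::nat)" "(2 + 4) mod 5 = (1::nat)"
      "(3 + 4) mod 5 = (2::nat)" "(4 + 4) mod 5 = (3::nat)" by simp_all
  have oP: "w \<in> V" if "({v 4, v 0}, \<alpha> 0) \<in> family_edges D" "({v 0, v 1}, \<alpha> 1) \<in> family_edges D"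
    "({v 1, v 2}, \<alpha> 2) \<in> family_edges D" "({v 2, v 3}, \<alpha> 3) \<in> family_edges D"
    "({v 3, v 4}, \<alpha> 4) \<in> family_edges D" "({v 0, w}, \<alpha> 1) \<in> family_edges D" for w
  proof -
    have "family_contains D {({v i, v ((i + 1) mod 5)}, \<alpha> ((i + 1) mod 5)) | i. i < 5}"
      apply (rule FC, rule five[where P = "\<lambda>i. ({v i, v ((i + 1) mod 5)}, \<alpha> ((i + 1) mod 5)) \<in> family_edges D"])
      unfolding mm by (rule that(2), rule that(3), rule that(4), rule that(5), rule that(1), assumption)
    then show ?thesis using ng[of 1 0 w] that(6) by (simp add: insert_commute)
  qed
  have oQ: "w \<in> V" if "({v 1, v 2}, \<alpha> 0) \<in> family_edges D" "({v 2, v 3}, \<alpha> 1) \<in> family_edges D"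
    "({v 3, v 4}, \<alpha> 2) \<in> family_edges D" "({v 4, v 0}, \<alpha> 3) \<in> family_edges D"
    "({v 0, v 1}, \<alpha> 4) \<in> family_edges D" "({v 3, w}, \<alpha> 1) \<in> family_edges D" for w
  proof -
    have "family_contains D {({v i, v ((i + 1) mod 5)}, \<alpha> ((i + 4) mod 5)) | i. i < 5}"
      apply (rule FC, rule five[where P = "\<lambda>i. ({v i, v ((i + 1) mod 5)}, \<alpha> ((i + 4) mod 5)) \<in> family_edges D"])
      unfolding mm by (rule that(5), rule that(1), rule that(2), rule that(3), rule that(4), assumption)
    then show ?thesis using ng[of 4 3 w] that(6) by (simp add: insert_commute)
  qed
  show False
    using r.core[OF d dc e V_def o00 o01 o10 o11 o20 o21 o30 o31 o40 o41 oP oQ] .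
qed

end
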